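(* Suppose all type sets are equal, $\Theta_i=\Theta_0$ for all $i$, and let $h=(h_1,\dots,h_n)$ determine a Groves mechanism (for an efficient decision function $f$). Define $h':\Theta_0^{n-1}\to\mathbb{R}$ by $$h'(x):=\frac{1}{n!}\sum_{\pi\in\Pi(n-1)}\sum_{j=1}^n h_j(x^\pi),$$ where $\Pi(n-1)$ is the set of permutations of $\{1,\dots,n-1\}$ and $x^\pi_i:=x_{\pi^{-1}(i)}$; $h'$ determines an anonymous Groves mechanism. Let $G(\theta):=\sum_{j=1}^n v_j(f(\theta),\theta_j)$ and assume $G(\theta)=G(\theta^\pi)$ for all $\theta\in\Theta$ and all permutations $\pi$ of $\{1,\dots,n\}$ (where $\theta^\pi_i:=\theta_{\pi^{-1}(i)}$). Then: (i) if the Groves mechanism $h$ is feasible, so is $h'$; (ii) if an anonymous Groves mechanism $h^0$ is welfare dominated by $h$, then $h^0$ is welfare dominated by $h'$.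
   Context: Setting: decisions $D$, players $1,\dots,n$ ($n\ge 2$), type sets $\Theta_i$, $\Theta=\prod_i\Theta_i$, initial utilities $v_i:D\times\Theta_i\to\mathbb{R}$; a tax-based mechanism $(f,t)$ gives player $i$ final utility $v_i(f(\theta),\theta_i)+t_i(\theta)$. A Groves mechanism has $f(\theta)\in\arg\max_{d\in D}\sum_i v_i(d,\theta_i)$ and $t_i(\theta)=\sum_{j\ne i}v_j(f(\theta),\theta_j)+h_i(\theta_{-i})$ for arbitrary functions $h_i$ of the other players' types; it is identified with $(h_1,\dots,h_n)$. It is anonymous if all $\Theta_i$ are equal and all $h_i$ equal a single function $h$ that is permutation independent (symmetric in its $n-1$ arguments). A mechanism is feasible if $\sum_i t_i(\theta)\le 0$ for all $\theta$. For mechanisms with the same decision function, $t'$ welfare dominates $t$ if $\sum_i t_i(\theta)\le\sum_i t'_i(\theta)$ for all $\theta$, with strict inequality for some $\theta$. *)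

theory Defs
  imports Complex_Main "HOL-Combinatorics.Permutations"
begin

text \<open>Players are indexed 0,...,n-1; a type profile is a list of length n.
  All type sets equal the common set Theta0.\<close>

definition profiles :: "'t set \<Rightarrow> nat \<Rightarrow> 't list set" where
  "profiles Theta0 m = {x. length x = m \<and> set x \<subseteq> Theta0}"

definition minus_i :: "nat \<Rightarrow> 't list \<Rightarrow> 't list" where
  "minus_i i \<theta> = take i \<theta> @ drop (Suc i) \<theta>"

definition perm_list :: "(nat \<Rightarrow> nat) \<Rightarrow> 't list \<Rightarrow> 't list" where
  "perm_list \<pi> x = map (\<lambda>i. x ! inv \<pi> i) [0..<length x]"

definition total_util :: "(nat \<Rightarrow> 'd \<Rightarrow> 't \<Rightarrow> real) \<Rightarrow> nat \<Rightarrow> 'd \<Rightarrow> 't list \<Rightarrow> real" where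
  "total_util v n d \<theta> = (\<Sum>j<n. v j d (\<theta> ! j))"

definition efficient :: "'d set \<Rightarrow> 't set \<Rightarrow> (nat \<Rightarrow> 'd \<Rightarrow> 't \<Rightarrow> real) \<Rightarrow> nat \<Rightarrow> ('t list \<Rightarrow> 'd) \<Rightarrow> bool" where
  "efficient D Theta0 v n f \<longleftrightarrow>
     (\<forall>\<theta>\<in>profiles Theta0 n. f \<theta> \<in> D \<and> (\<forall>d\<in>D. total_util v n d \<theta> \<le> total_util v n (f \<theta>) \<theta>))"

definition groves_tax :: "(nat \<Rightarrow> 'd \<Rightarrow> 't \<Rightarrow> real) \<Rightarrow> nat \<Rightarrow> ('t list \<Rightarrow> 'd)
      \<Rightarrow> (nat \<Rightarrow> 't list \<Rightarrow> real) \<Rightarrow> 't list \<Rightarrow> nat \<Rightarrow> real" where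
  "groves_tax v n f h \<theta> i = (\<Sum>j\<in>{..<n} - {i}. v j (f \<theta>) (\<theta> ! j)) + h i (minus_i i \<theta>)"

definition feasible :: "'t set \<Rightarrow> nat \<Rightarrow> ('t list \<Rightarrow> nat \<Rightarrow> real) \<Rightarrow> bool" where
  "feasible Theta0 n t \<longleftrightarrow> (\<forall>\<theta>\<in>profiles Theta0 n. (\<Sum>i<n. t \<theta> i) \<le> 0)"

definition welfare_dominates :: "'t set \<Rightarrow> nat \<Rightarrow> ('t list \<Rightarrow> nat \<Rightarrow> real) \<Rightarrow> ('t list \<Rightarrow> nat \<Rightarrow> real) \<Rightarrow> bool" where
  "welfare_dominates Theta0 n t' t \<longleftrightarrow>
     (\<forall>\<theta>\<in>profiles Theta0 n. (\<Sum>i<n. t \<theta> i) \<le> (\<Sum>i<n. t' \<theta> i)) \<and>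
     (\<exists>\<theta>\<in>profiles Theta0 n. (\<Sum>i<n. t \<theta> i) < (\<Sum>i<n. t' \<theta> i))"

definition perm_independent :: "'t set \<Rightarrow> nat \<Rightarrow> ('t list \<Rightarrow> real) \<Rightarrow> bool" where
  "perm_independent Theta0 n g \<longleftrightarrow>
     (\<forall>x\<in>profiles Theta0 (n - 1). \<forall>\<pi>. \<pi> permutes {..<n - 1} \<longrightarrow> g (perm_list \<pi> x) = g x)"

definition sym_h :: "nat \<Rightarrow> (nat \<Rightarrow> 't list \<Rightarrow> real) \<Rightarrow> 't list \<Rightarrow> real" where
  "sym_h n h x = (1 / fact n) * (\<Sum>\<pi>\<in>{\<pi>. \<pi> permutes {..<n - 1}}. \<Sum>j<n. h j (perm_list \<pi> x))"

end

theory Submission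
  imports Defs
begin

definition ins1 :: "nat \<Rightarrow> nat \<Rightarrow> nat" where "ins1 k a = (if a < k then a else Suc a)"
definition del1 :: "nat \<Rightarrow> nat \<Rightarrow> nat" where "del1 k a = (if a < k then a else a - 1)"
definition pl :: "(nat \<Rightarrow> nat) \<Rightarrow> 't list \<Rightarrow> 't list" where
  "pl \<rho> x = map (\<lambda>b. x ! \<rho> b) [0..<length x]"

definition Psi :: "nat \<Rightarrow> nat \<Rightarrow> nat \<times> (nat \<Rightarrow> nat) \<Rightarrow> nat \<Rightarrow> nat" where
  "Psi n j = (\<lambda>(i,\<mu>) a. if a = j then i else if a < n then ins1 i (\<mu> (del1 j a)) else a)"
definition Phi :: "nat \<Rightarrow> nat \<Rightarrow> (nat \<Rightarrow> nat) \<Rightarrow> nat \<times> (nat \<Rightarrow> nat)" where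
  "Phi n j \<rho> = (\<rho> j, \<lambda>m. if m < n - 1 then del1 (\<rho> j) (\<rho> (ins1 j m)) else m)"

lemma permutesI':
  assumes "finite S" "inj_on p S" "p ` S \<subseteq> S" "\<And>x. x \<notin> S \<Longrightarrow> p x = x"
  shows "p permutes S"
proof (rule bij_imp_permutes)
  have "p ` S = S" using endo_inj_surj assms by blast
  then show "bij_betw p S S" using assms by (auto simp: bij_betw_def)
qed (use assms in auto)

lemma nth_minus_i:
  assumes "i < length \<theta>" "m < length \<theta> - 1"
  shows "minus_i i \<theta> ! m = \<theta> ! ins1 i m"
  using assms by (auto simp: minus_i_def ins1_def nth_append min_def)

lemma length_minus_i: "i < length \<theta> \<Longrightarrow> length (minus_i i \<theta>) = length \<theta> - 1"
  by (auto simp: minus_i_def)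

lemma perm_list_pl: "\<pi> permutes S \<Longrightarrow> perm_list (inv \<pi>) x = pl \<pi> x"
  by (simp add: perm_list_def pl_def permutes_inv_inv)

lemma Psi_perm:
  assumes "n \<ge> 2" "j < n" "i < n" "\<mu> permutes {..<n-1}"
  shows "Psi n j (i,\<mu>) permutes {..<n}"
proof (rule permutesI')
  have mi: "\<And>m. m < n - 1 \<Longrightarrow> \<mu> m < n - 1" using assms(4) permutes_in_image by fastforce
  have inj: "inj \<mu>" using assms(4) permutes_inj by blast
  show "inj_on (Psi n j (i, \<mu>)) {..<n}"
  proof (rule inj_onI)
    fix a b assume a: "a \<in> {..<n}" and b: "b \<in> {..<n}" and e: "Psi n j (i, \<mu>) a = Psi n j (i, \<mu>) b"
    have ad: "a \<noteq> j \<Longrightarrow> del1 j a < n - 1" using a assms by (auto simp: del1_def)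
    have bd: "b \<noteq> j \<Longrightarrow> del1 j b < n - 1" using b assms by (auto simp: del1_def)
    show "a = b"
    proof (cases "a = j"; cases "b = j")
      assume "a \<noteq> j" "b \<noteq> j"
      then have "ins1 i (\<mu> (del1 j a)) = ins1 i (\<mu> (del1 j b))" using e a b by (auto simp: Psi_def)
      then have "\<mu> (del1 j a) = \<mu> (del1 j b)" by (auto simp: ins1_def split: if_splits)
      then have "del1 j a = del1 j b" using inj by (auto dest: injD)
      then show "a = b" using \<open>a \<noteq> j\<close> \<open>b \<noteq> j\<close> by (auto simp: del1_def split: if_splits)
    qed (use e a b in \<open>auto simp: Psi_def ins1_def split: if_splits\<close>)
  qed
  show "Psi n j (i, \<mu>) ` {..<n} \<subseteq> {..<n}"
  proof
    fix y assume "y \<in> Psi n j (i, \<mu>) ` {..<n}"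
    then obtain a where a: "a < n" "y = Psi n j (i, \<mu>) a" by auto
    show "y \<in> {..<n}"
    proof (cases "a = j")
      case False
      then have "del1 j a < n - 1" using a assms by (auto simp: del1_def)
      then have "\<mu> (del1 j a) < n - 1" by (rule mi)
      then show ?thesis using a False assms by (auto simp: Psi_def ins1_def)
    qed (use a assms in \<open>auto simp: Psi_def\<close>)
  qed
qed (use assms in \<open>auto simp: Psi_def\<close>)

lemma Phi_mem:
  assumes "n \<ge> 2" "j < n" "\<rho> permutes {..<n}"
  shows "Phi n j \<rho> \<in> {..<n} \<times> {\<mu>. \<mu> permutes {..<n-1}}"
proof -
  have inj: "inj \<rho>" using assms(3) permutes_inj by blast
  have ri: "\<And>a. a < n \<Longrightarrow> \<rho> a < n" using assms(3) permutes_in_image by fastforce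
  have insl: "\<And>m. m < n - 1 \<Longrightarrow> ins1 j m < n" "\<And>m. ins1 j m \<noteq> j"
    using assms by (auto simp: ins1_def)
  have ne: "\<And>m. \<rho> (ins1 j m) \<noteq> \<rho> j" using inj insl(2) by (metis injD)
  let ?\<mu> = "\<lambda>m. if m < n - 1 then del1 (\<rho> j) (\<rho> (ins1 j m)) else m"
  have "?\<mu> permutes {..<n-1}"
  proof (rule permutesI')
    show "inj_on ?\<mu> {..<n - 1}"
    proof (rule inj_onI)
      fix a b assume a: "a \<in> {..<n-1}" and b: "b \<in> {..<n-1}" and e: "?\<mu> a = ?\<mu> b"
      then have "del1 (\<rho> j) (\<rho> (ins1 j a)) = del1 (\<rho> j) (\<rho> (ins1 j b))" by auto
      then have "\<rho> (ins1 j a) = \<rho> (ins1 j b)" using ne[of a] ne[of b]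
        by (auto simp: del1_def split: if_splits)
      then have "ins1 j a = ins1 j b" using inj by (auto dest: injD)
      then show "a = b" by (auto simp: ins1_def split: if_splits)
    qed
    show "?\<mu> ` {..<n - 1} \<subseteq> {..<n - 1}"
    proof
      fix y assume "y \<in> ?\<mu> ` {..<n - 1}"
      then obtain a where a: "a < n - 1" "y = ?\<mu> a" by auto
      have "\<rho> (ins1 j a) < n" using ri insl a by blast
      moreover have "\<rho> j < n" using ri assms by blast
      ultimately show "y \<in> {..<n-1}" using a ne[of a] by (auto simp: del1_def)
    qed
  qed auto
  then show ?thesis using ri assms by (auto simp: Phi_def)
qed

lemma Phi_Psi:
  assumes "n \<ge> 2" "j < n" "i < n" "\<mu> permutes {..<n-1}"
  shows "Phi n j (Psi n j (i,\<mu>)) = (i,\<mu>)"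
proof -
  have "\<And>m. m \<ge> n - 1 \<Longrightarrow> \<mu> m = m" using assms(4) permutes_not_in by fastforce
  moreover have "\<And>m. m < n - 1 \<Longrightarrow> \<mu> m < n - 1" using assms(4) permutes_in_image by fastforce
  ultimately show ?thesis using assms
    by (auto simp: Phi_def Psi_def ins1_def del1_def fun_eq_iff)
qed

lemma Psi_Phi:
  assumes "n \<ge> 2" "j < n" "\<rho> permutes {..<n}"
  shows "Psi n j (Phi n j \<rho>) = \<rho>"
proof
  fix a
  have inj: "inj \<rho>" using assms(3) permutes_inj by blast
  show "Psi n j (Phi n j \<rho>) a = \<rho> a"
  proof (cases "a = j")
    case False
    show ?thesis
    proof (cases "a < n")
      case True
      have d: "del1 j a < n - 1" using True False assms(2) by (auto simp: del1_def)
      have ia: "ins1 j (del1 j a) = a" using False by (auto simp: ins1_def del1_def)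
      have "\<rho> a \<noteq> \<rho> j" using False inj by (auto dest: injD)
      then show ?thesis using True False d ia
        by (auto simp: Psi_def Phi_def ins1_def del1_def)
    next
      case F: False
      then show ?thesis using assms(3) permutes_not_in[OF assms(3)] False by (auto simp: Psi_def Phi_def)
    qed
  qed (auto simp: Psi_def Phi_def)
qed

lemma Psi_bij:
  assumes "n \<ge> 2" "j < n"
  shows "bij_betw (Psi n j) ({..<n} \<times> {\<mu>. \<mu> permutes {..<n-1}}) {\<rho>. \<rho> permutes {..<n}}"
proof (rule bij_betw_byWitness[where f'="Phi n j"])
  show "Phi n j ` {\<rho>. \<rho> permutes {..<n}} \<subseteq> {..<n} \<times> {\<mu>. \<mu> permutes {..<n - 1}}"
    using Phi_mem[OF assms] by blast
qed (use assms Phi_Psi Psi_Phi Psi_perm in auto)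

lemma minus_i_pl_Psi:
  assumes "n \<ge> 2" "j < n" "i < n" "\<mu> permutes {..<n-1}" "length \<theta> = n"
  shows "minus_i j (pl (Psi n j (i,\<mu>)) \<theta>) = pl \<mu> (minus_i i \<theta>)"
proof (rule nth_equalityI)
  show "length (minus_i j (pl (Psi n j (i, \<mu>)) \<theta>)) = length (pl \<mu> (minus_i i \<theta>))"
    using assms by (simp add: length_minus_i pl_def)
  fix m assume "m < length (minus_i j (pl (Psi n j (i, \<mu>)) \<theta>))"
  then have m: "m < n - 1" using assms by (simp add: length_minus_i pl_def)
  have h1: "ins1 j m < n" "ins1 j m \<noteq> j" "del1 j (ins1 j m) = m" using m assms by (auto simp: ins1_def del1_def)
  have "\<mu> m < n - 1" using assms(4) m permutes_in_image by fastforce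
  then have "minus_i i \<theta> ! \<mu> m = \<theta> ! ins1 i (\<mu> m)" using assms by (simp add: nth_minus_i)
  with h1 show "minus_i j (pl (Psi n j (i, \<mu>)) \<theta>) ! m = pl \<mu> (minus_i i \<theta>) ! m"
    using m assms by (simp add: nth_minus_i pl_def length_minus_i Psi_def)
qed

lemma key_j:
  assumes "n \<ge> 2" "j < n" "length \<theta> = n"
  shows "(\<Sum>i<n. \<Sum>\<pi>\<in>{\<pi>. \<pi> permutes {..<n-1}}. F (perm_list \<pi> (minus_i i \<theta>)))
       = (\<Sum>\<sigma>\<in>{\<sigma>. \<sigma> permutes {..<n}}. F (minus_i j (perm_list \<sigma> \<theta>)))"
proof -
  have "(\<Sum>\<sigma>\<in>{\<sigma>. \<sigma> permutes {..<n}}. F (minus_i j (perm_list \<sigma> \<theta>)))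
      = (\<Sum>\<sigma>\<in>{\<sigma>. \<sigma> permutes {..<n}}. F (minus_i j (perm_list (inv \<sigma>) \<theta>)))"
    by (rule sum_permutations_inverse)
  also have "\<dots> = (\<Sum>\<sigma>\<in>{\<sigma>. \<sigma> permutes {..<n}}. F (minus_i j (pl \<sigma> \<theta>)))"
    by (rule sum.cong) (auto simp: perm_list_pl)
  also have "\<dots> = (\<Sum>x\<in>{..<n} \<times> {\<mu>. \<mu> permutes {..<n-1}}. F (minus_i j (pl (Psi n j x) \<theta>)))"
    by (rule sum.reindex_bij_betw[symmetric, OF Psi_bij[OF assms(1,2)]])
  also have "\<dots> = (\<Sum>x\<in>{..<n} \<times> {\<mu>. \<mu> permutes {..<n-1}}. F (pl (snd x) (minus_i (fst x) \<theta>)))"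
    by (rule sum.cong) (auto simp: minus_i_pl_Psi assms)
  also have "\<dots> = (\<Sum>i<n. \<Sum>\<mu>\<in>{\<mu>. \<mu> permutes {..<n-1}}. F (pl \<mu> (minus_i i \<theta>)))"
    by (simp add: sum.cartesian_product split_def)
  also have "\<dots> = (\<Sum>i<n. \<Sum>\<mu>\<in>{\<mu>. \<mu> permutes {..<n-1}}. F (pl (inv \<mu>) (minus_i i \<theta>)))"
    by (rule sum.cong[OF refl], rule sum_permutations_inverse)
  also have "\<dots> = (\<Sum>i<n. \<Sum>\<pi>\<in>{\<pi>. \<pi> permutes {..<n-1}}. F (perm_list \<pi> (minus_i i \<theta>)))"
    by (rule sum.cong[OF refl], rule sum.cong[OF refl])
       (auto simp: perm_list_def pl_def)
  finally show ?thesis by simp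
qed

lemma key:
  assumes "n \<ge> 2" "length \<theta> = n"
  shows "(\<Sum>i<n. sym_h n h (minus_i i \<theta>))
      = (1 / fact n) * (\<Sum>\<sigma>\<in>{\<sigma>. \<sigma> permutes {..<n}}. \<Sum>j<n. h j (minus_i j (perm_list \<sigma> \<theta>)))"
proof -
  have "(\<Sum>i<n. sym_h n h (minus_i i \<theta>))
     = (1 / fact n) * (\<Sum>i<n. \<Sum>\<pi>\<in>{\<pi>. \<pi> permutes {..<n-1}}. \<Sum>j<n. h j (perm_list \<pi> (minus_i i \<theta>)))"
    by (simp add: sym_h_def sum_distrib_left)
  also have "(\<Sum>i<n. \<Sum>\<pi>\<in>{\<pi>. \<pi> permutes {..<n-1}}. \<Sum>j<n. h j (perm_list \<pi> (minus_i i \<theta>)))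
     = (\<Sum>j<n. \<Sum>i<n. \<Sum>\<pi>\<in>{\<pi>. \<pi> permutes {..<n-1}}. h j (perm_list \<pi> (minus_i i \<theta>)))"
  proof -
    have "(\<Sum>i<n. \<Sum>\<pi>\<in>{\<pi>. \<pi> permutes {..<n-1}}. \<Sum>j<n. h j (perm_list \<pi> (minus_i i \<theta>)))
       = (\<Sum>i<n. \<Sum>j<n. \<Sum>\<pi>\<in>{\<pi>. \<pi> permutes {..<n-1}}. h j (perm_list \<pi> (minus_i i \<theta>)))"
      by (rule sum.cong[OF refl], rule sum.swap)
    also have "\<dots> = (\<Sum>j<n. \<Sum>i<n. \<Sum>\<pi>\<in>{\<pi>. \<pi> permutes {..<n-1}}. h j (perm_list \<pi> (minus_i i \<theta>)))"
      by (rule sum.swap)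
    finally show ?thesis .
  qed
  also have "\<dots> = (\<Sum>j<n. \<Sum>\<sigma>\<in>{\<sigma>. \<sigma> permutes {..<n}}. h j (minus_i j (perm_list \<sigma> \<theta>)))"
    by (rule sum.cong[OF refl], rule key_j) (use assms in auto)
  also have "\<dots> = (\<Sum>\<sigma>\<in>{\<sigma>. \<sigma> permutes {..<n}}. \<Sum>j<n. h j (minus_i j (perm_list \<sigma> \<theta>)))"
    by (rule sum.swap)
  finally show ?thesis .
qed

lemma groves_sum:
  "(\<Sum>i<n. groves_tax v n f H \<theta> i) = (real n - 1) * total_util v n (f \<theta>) \<theta> + (\<Sum>i<n. H i (minus_i i \<theta>))"
proof -
  have "(\<Sum>i<n. groves_tax v n f H \<theta> i) = (\<Sum>i<n. total_util v n (f \<theta>) \<theta> - v i (f \<theta>) (\<theta> ! i)) + (\<Sum>i<n. H i (minus_i i \<theta>))"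
    by (simp add: groves_tax_def sum.distrib sum_diff1 total_util_def)
  also have "(\<Sum>i<n. total_util v n (f \<theta>) \<theta> - v i (f \<theta>) (\<theta> ! i)) = real n * total_util v n (f \<theta>) \<theta> - total_util v n (f \<theta>) \<theta>"
    by (simp add: sum_subtractf total_util_def)
  finally show ?thesis by (simp add: algebra_simps)
qed

lemma perm_list_profiles:
  assumes "\<theta> \<in> profiles Theta0 n" "\<sigma> permutes {..<n}"
  shows "perm_list \<sigma> \<theta> \<in> profiles Theta0 n"
proof -
  have "\<And>i. i < n \<Longrightarrow> inv \<sigma> i < n" using permutes_inv[OF assms(2)] permutes_in_image by fastforce
  then show ?thesis using assms(1) by (auto simp: profiles_def perm_list_def)
qed

lemma minus_i_profiles:
  assumes "\<theta> \<in> profiles Theta0 n" "i < n"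
  shows "minus_i i \<theta> \<in> profiles Theta0 (n - 1)"
proof -
  have "set (minus_i i \<theta>) \<subseteq> set \<theta>" unfolding minus_i_def
    by (auto dest: in_set_takeD in_set_dropD)
  then show ?thesis using assms by (auto simp: profiles_def length_minus_i)
qed

lemma card_P: "card {\<sigma>. \<sigma> permutes {..<n}} = fact n"
  by (rule card_permutations) auto

lemma avg:
  assumes "n \<ge> 2" "\<theta> \<in> profiles Theta0 n"
    and G: "\<forall>\<theta>\<in>profiles Theta0 n. \<forall>\<pi>. \<pi> permutes {..<n} \<longrightarrow>
           total_util v n (f \<theta>) \<theta> = total_util v n (f (perm_list \<pi> \<theta>)) (perm_list \<pi> \<theta>)"
  shows "(\<Sum>i<n. groves_tax v n f (\<lambda>_. sym_h n h) \<theta> i)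
       = (1 / fact n) * (\<Sum>\<sigma>\<in>{\<sigma>. \<sigma> permutes {..<n}}. \<Sum>i<n. groves_tax v n f h (perm_list \<sigma> \<theta>) i)"
proof -
  let ?G = "total_util v n (f \<theta>) \<theta>"
  have len: "length \<theta> = n" using assms(2) by (simp add: profiles_def)
  have "(\<Sum>\<sigma>\<in>{\<sigma>. \<sigma> permutes {..<n}}. \<Sum>i<n. groves_tax v n f h (perm_list \<sigma> \<theta>) i)
     = (\<Sum>\<sigma>\<in>{\<sigma>. \<sigma> permutes {..<n}}. (real n - 1) * ?G + (\<Sum>j<n. h j (minus_i j (perm_list \<sigma> \<theta>))))"
    by (rule sum.cong[OF refl]) (use G assms(2) in \<open>simp add: groves_sum\<close>)
  also have "\<dots> = fact n * ((real n - 1) * ?G) + (\<Sum>\<sigma>\<in>{\<sigma>. \<sigma> permutes {..<n}}. \<Sum>j<n. h j (minus_i j (perm_list \<sigma> \<theta>)))"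
    by (simp add: sum.distrib card_P)
  finally have e: "(\<Sum>\<sigma>\<in>{\<sigma>. \<sigma> permutes {..<n}}. \<Sum>i<n. groves_tax v n f h (perm_list \<sigma> \<theta>) i) = \<dots>" .
  show ?thesis
    by (subst e, subst groves_sum, subst key[OF assms(1) len]) (simp add: algebra_simps)
qed

lemma sym_h_const:
  assumes "n \<ge> 2" "perm_independent Theta0 n h0" "x \<in> profiles Theta0 (n - 1)"
  shows "sym_h n (\<lambda>_. h0) x = h0 x"
proof -
  have "sym_h n (\<lambda>_. h0) x = (1 / fact n) * (\<Sum>\<pi>\<in>{\<pi>. \<pi> permutes {..<n - 1}}. real n * h0 x)"
    unfolding sym_h_def
    by (rule arg_cong[where f="\<lambda>t. (1 / fact n) * t"], rule sum.cong[OF refl])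
       (use assms(2,3) in \<open>simp add: perm_independent_def\<close>)
  also have "\<dots> = (1 / fact n) * (fact (n - 1) * real n * h0 x)"
    by (simp add: card_P)
  also have "fact n = (real n * fact (n - 1) :: real)" using assms(1) fact_reduce[of n] by simp
  finally show ?thesis using assms(1) by simp
qed

lemma perm_list_comp:
  assumes "\<pi> permutes {..<m}" "\<sigma> permutes {..<m}" "length x = m"
  shows "perm_list \<pi> (perm_list \<sigma> x) = perm_list (\<pi> \<circ> \<sigma>) x"
proof -
  have "\<And>a. a < m \<Longrightarrow> inv \<pi> a < m" using permutes_inv[OF assms(1)] permutes_in_image by fastforce
  moreover have "inv (\<pi> \<circ> \<sigma>) = inv \<sigma> \<circ> inv \<pi>"
    using o_inv_distrib permutes_bij assms(1,2) by blast
  ultimately show ?thesis using assms(3) by (auto simp: perm_list_def)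
qed

lemma perm_list_id: "perm_list id x = x"
  by (simp add: perm_list_def map_nth)

theorem lemma1:
  fixes D :: "'d set" and Theta0 :: "'t set" and v :: "nat \<Rightarrow> 'd \<Rightarrow> 't \<Rightarrow> real"
    and n :: nat and f :: "'t list \<Rightarrow> 'd" and h :: "nat \<Rightarrow> 't list \<Rightarrow> real"
  assumes "n \<ge> 2"
    and "efficient D Theta0 v n f"
    and "\<forall>\<theta>\<in>profiles Theta0 n. \<forall>\<pi>. \<pi> permutes {..<n} \<longrightarrow>
           total_util v n (f \<theta>) \<theta> = total_util v n (f (perm_list \<pi> \<theta>)) (perm_list \<pi> \<theta>)"
  shows "perm_independent Theta0 n (sym_h n h)
    \<and> (feasible Theta0 n (groves_tax v n f h) \<longrightarrow>
         feasible Theta0 n (groves_tax v n f (\<lambda>_. sym_h n h)))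
    \<and> (\<forall>h0. perm_independent Theta0 n h0 \<and>
          welfare_dominates Theta0 n (groves_tax v n f h) (groves_tax v n f (\<lambda>_. h0)) \<longrightarrow>
          welfare_dominates Theta0 n (groves_tax v n f (\<lambda>_. sym_h n h)) (groves_tax v n f (\<lambda>_. h0)))"
proof (intro conjI impI allI)
  let ?P = "{\<sigma>. \<sigma> permutes {..<n}}"
  have finP: "finite ?P" by (simp add: finite_permutations)
  show "perm_independent Theta0 n (sym_h n h)"
    unfolding perm_independent_def
  proof (intro ballI allI impI)
    fix x and \<sigma> :: "nat \<Rightarrow> nat" assume x: "x \<in> profiles Theta0 (n - 1)" and s: "\<sigma> permutes {..<n - 1}"
    have len: "length x = n - 1" using x by (simp add: profiles_def)
    have "(\<Sum>\<pi>\<in>{\<pi>. \<pi> permutes {..<n - 1}}. \<Sum>j<n. h j (perm_list \<pi> (perm_list \<sigma> x)))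
        = (\<Sum>\<pi>\<in>{\<pi>. \<pi> permutes {..<n - 1}}. \<Sum>j<n. h j (perm_list (\<pi> \<circ> \<sigma>) x))"
      by (rule sum.cong[OF refl]) (use s len in \<open>simp add: perm_list_comp\<close>)
    also have "\<dots> = (\<Sum>\<pi>\<in>{\<pi>. \<pi> permutes {..<n - 1}}. \<Sum>j<n. h j (perm_list \<pi> x))"
      by (rule sum_permutations_compose_right[OF s, symmetric])
    finally show "sym_h n h (perm_list \<sigma> x) = sym_h n h x" by (simp add: sym_h_def)
  qed
  show "feasible Theta0 n (groves_tax v n f (\<lambda>_. sym_h n h))"
    if F: "feasible Theta0 n (groves_tax v n f h)"
    unfolding feasible_def
  proof
    fix \<theta> assume t: "\<theta> \<in> profiles Theta0 n"
    have "(\<Sum>\<sigma>\<in>?P. \<Sum>i<n. groves_tax v n f h (perm_list \<sigma> \<theta>) i) \<le> 0"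
      by (rule sum_nonpos) (use F t perm_list_profiles in \<open>force simp: feasible_def\<close>)
    then show "(\<Sum>i<n. groves_tax v n f (\<lambda>_. sym_h n h) \<theta> i) \<le> 0"
      unfolding avg[OF assms(1) t assms(3)] by (simp add: divide_nonpos_pos)
  qed
  fix h0
  assume H: "perm_independent Theta0 n h0 \<and>
          welfare_dominates Theta0 n (groves_tax v n f h) (groves_tax v n f (\<lambda>_. h0))"
  have t0: "(\<Sum>i<n. groves_tax v n f (\<lambda>_. h0) \<theta> i)
     = (1 / fact n) * (\<Sum>\<sigma>\<in>?P. \<Sum>i<n. groves_tax v n f (\<lambda>_. h0) (perm_list \<sigma> \<theta>) i)"
    if t: "\<theta> \<in> profiles Theta0 n" for \<theta>
  proof -
    have "(\<Sum>i<n. groves_tax v n f (\<lambda>_. h0) \<theta> i) = (\<Sum>i<n. groves_tax v n f (\<lambda>_. sym_h n (\<lambda>_. h0)) \<theta> i)"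
      unfolding groves_sum
      using sym_h_const[OF assms(1) conjunct1[OF H] minus_i_profiles[OF t]] by simp
    also have "\<dots> = (1 / fact n) * (\<Sum>\<sigma>\<in>?P. \<Sum>i<n. groves_tax v n f (\<lambda>_. h0) (perm_list \<sigma> \<theta>) i)"
      by (rule avg[OF assms(1) t assms(3)])
    finally show ?thesis .
  qed
  have W: "\<forall>\<theta>\<in>profiles Theta0 n. (\<Sum>i<n. groves_tax v n f (\<lambda>_. h0) \<theta> i) \<le> (\<Sum>i<n. groves_tax v n f h \<theta> i)"
    "\<exists>\<theta>\<in>profiles Theta0 n. (\<Sum>i<n. groves_tax v n f (\<lambda>_. h0) \<theta> i) < (\<Sum>i<n. groves_tax v n f h \<theta> i)"
    using H by (auto simp: welfare_dominates_def)
  have le: "(\<Sum>\<sigma>\<in>?P. \<Sum>i<n. groves_tax v n f (\<lambda>_. h0) (perm_list \<sigma> \<theta>) i)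
         \<le> (\<Sum>\<sigma>\<in>?P. \<Sum>i<n. groves_tax v n f h (perm_list \<sigma> \<theta>) i)"
    if t: "\<theta> \<in> profiles Theta0 n" for \<theta>
    by (rule sum_mono) (use W(1) t perm_list_profiles in force)
  have fp: "(0::real) < 1 / fact n" by simp
  show "welfare_dominates Theta0 n (groves_tax v n f (\<lambda>_. sym_h n h)) (groves_tax v n f (\<lambda>_. h0))"
    unfolding welfare_dominates_def
  proof (intro conjI ballI)
    fix \<theta> assume t: "\<theta> \<in> profiles Theta0 n"
    show "(\<Sum>i<n. groves_tax v n f (\<lambda>_. h0) \<theta> i) \<le> (\<Sum>i<n. groves_tax v n f (\<lambda>_. sym_h n h) \<theta> i)"
      unfolding t0[OF t] avg[OF assms(1) t assms(3)]
      using le[OF t] fp by (simp add: divide_right_mono)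
  next
    obtain \<theta> where t: "\<theta> \<in> profiles Theta0 n"
      and lt: "(\<Sum>i<n. groves_tax v n f (\<lambda>_. h0) \<theta> i) < (\<Sum>i<n. groves_tax v n f h \<theta> i)"
      using W(2) by blast
    have "(\<Sum>\<sigma>\<in>?P. \<Sum>i<n. groves_tax v n f (\<lambda>_. h0) (perm_list \<sigma> \<theta>) i)
         < (\<Sum>\<sigma>\<in>?P. \<Sum>i<n. groves_tax v n f h (perm_list \<sigma> \<theta>) i)"
    proof (rule sum_strict_mono_ex1[OF finP])
      show "\<forall>x\<in>?P. (\<Sum>i<n. groves_tax v n f (\<lambda>_. h0) (perm_list x \<theta>) i) \<le> (\<Sum>i<n. groves_tax v n f h (perm_list x \<theta>) i)"
        using W(1) t perm_list_profiles by blast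
      show "\<exists>a\<in>?P. (\<Sum>i<n. groves_tax v n f (\<lambda>_. h0) (perm_list a \<theta>) i) < (\<Sum>i<n. groves_tax v n f h (perm_list a \<theta>) i)"
        using lt permutes_id[of "{..<n}"] perm_list_id[of \<theta>] by (intro bexI[of _ id]) auto
    qed
    then have "(\<Sum>i<n. groves_tax v n f (\<lambda>_. h0) \<theta> i) < (\<Sum>i<n. groves_tax v n f (\<lambda>_. sym_h n h) \<theta> i)"
      using fp unfolding t0[OF t] avg[OF assms(1) t assms(3)]
      by (simp add: divide_strict_right_mono)
    then show "\<exists>\<theta>\<in>profiles Theta0 n. (\<Sum>i<n. groves_tax v n f (\<lambda>_. h0) \<theta> i) < (\<Sum>i<n. groves_tax v n f (\<lambda>_. sym_h n h) \<theta> i)"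
      using t by blast
  qed
qed

end
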